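(* Let $F_2=\langle x,y\rangle$ be the free group of rank $2$, and for $i=1,2,\ldots$ define the words $$a_i(x,y)=y^{(x y^i)^{2} x^{-1}}\, y^{-x}\in F_2 .$$ Let $G=\langle a_1,a_2,\ldots \mid r_1,r_2,\ldots\rangle$ be an arbitrary countable group given by generators and defining relations, where each relator $r_s$ is a group word in finitely many of the letters, say $r_s=r_s(a_{i_{s,1}},\ldots,a_{i_{s,k_s}})$. For each $s$ let $$r'_s(x,y)=r_s\big(a_{i_{s,1}}(x,y),\ldots,a_{i_{s,k_s}}(x,y)\big)\in F_2$$ be the word obtained by substituting $a_{i}(x,y)$ for every occurrence of $a_{i}$ in $r_s$. Then the map $\gamma: a_i\mapsto a_i(x,y)$, $i=1,2,\ldots$, defines an injective embedding of $G$ into the $2$-generator group $$T_G=\langle x,y \mid r'_1(x,y),\ r'_2(x,y),\ldots\rangle .$$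
   Context: Notation: $u^v=v^{-1}uv$ and $u^{-v}=(u^{-1})^v$. *)

theory Defs
  imports "HOL-Algebra.Group"
begin

text \<open>A group word over an alphabet of type 'a is a list of letters with signs:
  (a, True) stands for a, (a, False) stands for a^-1.\<close>

type_synonym 'a word = "('a \<times> bool) list"

definition inv_word :: "'a word \<Rightarrow> 'a word" where
  "inv_word w = rev (map (\<lambda>(a, b). (a, \<not> b)) w)"

inductive pres_eq :: "'a word set \<Rightarrow> 'a word \<Rightarrow> 'a word \<Rightarrow> bool" for R where
  refl: "pres_eq R w w"
| sym: "pres_eq R u v \<Longrightarrow> pres_eq R v u"
| trans: "pres_eq R u v \<Longrightarrow> pres_eq R v w \<Longrightarrow> pres_eq R u w"
| cancel: "pres_eq R (u @ [(a, b), (a, \<not> b)] @ v) (u @ v)"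
| relator: "r \<in> R \<Longrightarrow> pres_eq R (u @ r @ v) (u @ v)"

definition pres_class :: "'a word set \<Rightarrow> 'a word \<Rightarrow> 'a word set" where
  "pres_class R w = {v. pres_eq R v w}"

definition presentation :: "'a set \<Rightarrow> 'a word set \<Rightarrow> ('a word set) monoid" where
  "presentation X R =
     \<lparr> carrier = {pres_class R w | w. set w \<subseteq> X \<times> UNIV},
       mult = (\<lambda>A B. {w. \<exists>u\<in>A. \<exists>v\<in>B. pres_eq R w (u @ v)}),
       one = pres_class R [] \<rparr>"

datatype xy = X | Y

definition xw :: "xy word" where "xw = [(X, True)]"
definition xinv :: "xy word" where "xinv = [(X, False)]"
definition yw :: "xy word" where "yw = [(Y, True)]"
definition yinv :: "xy word" where "yinv = [(Y, False)]"

text \<open>u^v = v^-1 u v.  a_i = y^((x y^i)^2 x^-1) y^(-x) with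
  v = x y^i x y^i x^-1, i.e. a_i = v^-1 y v x^-1 y^-1 x.\<close>

definition conj_word :: "'a word \<Rightarrow> 'a word \<Rightarrow> 'a word" where
  "conj_word u v = inv_word v @ u @ v"

definition a_word :: "nat \<Rightarrow> xy word" where
  "a_word i =
     (let v = xw @ concat (replicate i yw) @ xw @ concat (replicate i yw) @ xinv
      in conj_word yw v @ conj_word yinv xw)"

definition subst_a :: "nat word \<Rightarrow> xy word" where
  "subst_a w = concat (map (\<lambda>(i, b). if b then a_word i else inv_word (a_word i)) w)"

end

theory Submission
  imports Defs
begin

lemma pres_eq_cong:
  assumes "pres_eq R a b" shows "pres_eq R (p @ a @ q) (p @ b @ q)"
  using assms
proof (induction rule: pres_eq.induct)
  case (refl w) then show ?case by (rule pres_eq.refl)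
next
  case (sym u v) then show ?case using pres_eq.sym by blast
next
  case (trans u v w) then show ?case by (metis pres_eq.trans)
next
  case (cancel u a b v)
  have "pres_eq R ((p @ u) @ [(a, b), (a, \<not> b)] @ (v @ q)) ((p @ u) @ (v @ q))"
    by (rule pres_eq.cancel)
  then show ?case by simp
next
  case (relator r u v)
  have "pres_eq R ((p @ u) @ r @ (v @ q)) ((p @ u) @ (v @ q))"
    by (rule pres_eq.relator) fact
  then show ?case by simp
qed

lemma pres_eq_append:
  assumes "pres_eq R a b" "pres_eq R c d" shows "pres_eq R (a @ c) (b @ d)"
proof -
  have "pres_eq R ([] @ a @ c) ([] @ b @ c)" by (rule pres_eq_cong) fact
  moreover have "pres_eq R (b @ c @ []) (b @ d @ [])" by (rule pres_eq_cong) fact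
  ultimately show ?thesis by (auto intro: pres_eq.trans)
qed

lemma class_eq_iff: "pres_class R u = pres_class R v \<longleftrightarrow> pres_eq R u v"
proof
  assume "pres_class R u = pres_class R v"
  moreover have "u \<in> pres_class R u" by (simp add: pres_class_def pres_eq.refl)
  ultimately show "pres_eq R u v" by (simp add: pres_class_def)
next
  assume "pres_eq R u v"
  then show "pres_class R u = pres_class R v"
    unfolding pres_class_def by (auto intro: pres_eq.trans pres_eq.sym)
qed

lemma mult_class:
  "pres_class R u \<otimes>\<^bsub>presentation XX R\<^esub> pres_class R v = pres_class R (u @ v)"
  unfolding presentation_def pres_class_def
  by (auto intro: pres_eq.trans pres_eq.sym pres_eq.refl pres_eq_append)

lemma one_pres: "\<one>\<^bsub>presentation XX R\<^esub> = pres_class R []"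
  by (simp add: presentation_def)

lemma carrier_pres: "carrier (presentation XX R) = {pres_class R w | w. set w \<subseteq> XX \<times> UNIV}"
  by (simp add: presentation_def)

lemma inv_word_Cons: "inv_word ((a, b) # w) = inv_word w @ [(a, \<not> b)]"
  by (simp add: inv_word_def)

lemma inv_word_Nil[simp]: "inv_word [] = []"
  by (simp add: inv_word_def)

lemma inv_word_append[simp]: "inv_word (u @ v) = inv_word v @ inv_word u"
  by (simp add: inv_word_def)

lemma set_inv_word: "set w \<subseteq> XX \<times> UNIV \<Longrightarrow> set (inv_word w) \<subseteq> XX \<times> UNIV"
  by (auto simp: inv_word_def)

lemma inv_word_cancel: "pres_eq R (inv_word u @ u) []"
proof (induction u)
  case Nil then show ?case by (simp add: pres_eq.refl)
next
  case (Cons l u)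
  obtain a b where l: "l = (a, b)" by force
  have "pres_eq R (inv_word u @ [(a, \<not> b), (a, \<not> \<not> b)] @ u) (inv_word u @ u)"
    by (rule pres_eq.cancel)
  then have "pres_eq R (inv_word (l # u) @ l # u) (inv_word u @ u)"
    by (simp add: l inv_word_Cons)
  then show ?case using Cons by (blast intro: pres_eq.trans)
qed

lemma group_pres: "group (presentation XX R)"
proof (rule groupI)
  fix x y assume "x \<in> carrier (presentation XX R)" "y \<in> carrier (presentation XX R)"
  then obtain u v where "x = pres_class R u" "set u \<subseteq> XX \<times> UNIV" "y = pres_class R v" "set v \<subseteq> XX \<times> UNIV"
    by (auto simp: carrier_pres)
  then show "x \<otimes>\<^bsub>presentation XX R\<^esub> y \<in> carrier (presentation XX R)"
    by (auto simp: mult_class carrier_pres intro!: exI[of _ "u @ v"])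
next
  show "\<one>\<^bsub>presentation XX R\<^esub> \<in> carrier (presentation XX R)"
    by (auto simp: one_pres carrier_pres intro!: exI[of _ "[]"])
next
  fix x y z assume "x \<in> carrier (presentation XX R)" "y \<in> carrier (presentation XX R)"
    "z \<in> carrier (presentation XX R)"
  then obtain u v w where "x = pres_class R u" "y = pres_class R v" "z = pres_class R w"
    by (auto simp: carrier_pres)
  then show "x \<otimes>\<^bsub>presentation XX R\<^esub> y \<otimes>\<^bsub>presentation XX R\<^esub> z =
    x \<otimes>\<^bsub>presentation XX R\<^esub> (y \<otimes>\<^bsub>presentation XX R\<^esub> z)"
    by (simp add: mult_class)
next
  fix x assume "x \<in> carrier (presentation XX R)"
  then obtain u where "x = pres_class R u" by (auto simp: carrier_pres)
  then show "\<one>\<^bsub>presentation XX R\<^esub> \<otimes>\<^bsub>presentation XX R\<^esub> x = x"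
    by (simp add: mult_class one_pres)
next
  fix x assume "x \<in> carrier (presentation XX R)"
  then obtain u where u: "x = pres_class R u" "set u \<subseteq> XX \<times> UNIV" by (auto simp: carrier_pres)
  show "\<exists>y\<in>carrier (presentation XX R). y \<otimes>\<^bsub>presentation XX R\<^esub> x = \<one>\<^bsub>presentation XX R\<^esub>"
  proof (intro bexI)
    show "pres_class R (inv_word u) \<otimes>\<^bsub>presentation XX R\<^esub> x = \<one>\<^bsub>presentation XX R\<^esub>"
      using inv_word_cancel by (simp add: u mult_class one_pres class_eq_iff)
    show "pres_class R (inv_word u) \<in> carrier (presentation XX R)"
      using u set_inv_word[OF u(2)] by (auto simp: carrier_pres)
  qed
qed


lemma (in group) cancel_l1: "x \<in> carrier G \<Longrightarrow> y \<in> carrier G \<Longrightarrow> x \<otimes> (inv x \<otimes> y) = y"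
  by (simp add: m_assoc[symmetric])
lemma (in group) cancel_l2: "x \<in> carrier G \<Longrightarrow> y \<in> carrier G \<Longrightarrow> inv x \<otimes> (x \<otimes> y) = y"
  by (simp add: m_assoc[symmetric])

type_synonym st = "int \<times> nat word set \<times> nat word set"

locale PR = fixes R :: "nat word set"
begin

definition GG where "GG = presentation {1::nat..} R"

sublocale G: group GG unfolding GG_def by (rule group_pres)

abbreviation gmul where "gmul a b \<equiv> a \<otimes>\<^bsub>GG\<^esub> b"
abbreviation ginv where "ginv a \<equiv> inv\<^bsub>GG\<^esub> a"

definition gx :: "nat \<Rightarrow> nat word set" where
  "gx i = (if i = 0 then \<one>\<^bsub>GG\<^esub> else pres_class R [(i, True)])"

definition cc :: "nat \<Rightarrow> nat word set" where
  "cc m = gmul (ginv (gx (m - 1))) (gx m)"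

lemma gx_carrier[simp]: "gx i \<in> carrier GG"
proof (cases "i = 0")
  case True then show ?thesis by (simp add: gx_def)
next
  case False then show ?thesis
    unfolding gx_def GG_def carrier_pres by (auto intro!: exI[of _ "[(i, True)]"])
qed

lemma cc_carrier[simp]: "cc i \<in> carrier GG"
  by (simp add: cc_def G.m_closed G.inv_closed)

definition Af :: "st \<Rightarrow> st" where "Af = (\<lambda>(n, h, v). (n + 1, h, v))"
definition Aif :: "st \<Rightarrow> st" where "Aif = (\<lambda>(n, h, v). (n - 1, h, v))"
definition Bf :: "st \<Rightarrow> st" where
  "Bf = (\<lambda>(n, h, v). (n - 1, h, if n \<ge> 1 then gmul (cc (nat n)) v else v))"
definition Bif :: "st \<Rightarrow> st" where
  "Bif = (\<lambda>(n, h, v). (n + 1, h, if n + 1 \<ge> 1 then gmul (ginv (cc (nat (n + 1)))) v else v))"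
definition Cf :: "st \<Rightarrow> st" where
  "Cf = (\<lambda>(n, h, v). if n = 0 then (n, gmul v h, v) else (n, h, v))"
definition Cif :: "st \<Rightarrow> st" where
  "Cif = (\<lambda>(n, h, v). if n = 0 then (n, gmul (ginv v) h, v) else (n, h, v))"

definition DD :: "st set" where "DD = UNIV \<times> carrier GG \<times> carrier GG"

lemma Af_pow[simp]: "(Af ^^ i) (n, h, v) = (n + int i, h, v)"
  by (induction i arbitrary: n) (auto simp: Af_def)
lemma Aif_pow[simp]: "(Aif ^^ i) (n, h, v) = (n - int i, h, v)"
  by (induction i arbitrary: n) (auto simp: Aif_def)

lemma Bf_DD: "s \<in> DD \<Longrightarrow> Bf s \<in> DD"
  by (auto simp: Bf_def DD_def G.m_closed)
lemma Bif_DD: "s \<in> DD \<Longrightarrow> Bif s \<in> DD"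
  by (auto simp: Bif_def DD_def G.m_closed G.inv_closed)
lemma Cf_DD: "s \<in> DD \<Longrightarrow> Cf s \<in> DD"
  by (auto simp: Cf_def DD_def)
lemma Cif_DD: "s \<in> DD \<Longrightarrow> Cif s \<in> DD"
  by (auto simp: Cif_def DD_def)
lemma Af_DD: "s \<in> DD \<Longrightarrow> Af s \<in> DD"
  by (auto simp: Af_def DD_def)
lemma Aif_DD: "s \<in> DD \<Longrightarrow> Aif s \<in> DD"
  by (auto simp: Aif_def DD_def)

lemma Bif_Bf: "s \<in> DD \<Longrightarrow> Bif (Bf s) = s"
proof -
  assume s: "s \<in> DD"
  obtain n h v where sv: "s = (n, h, v)" by (cases s) auto
  have "v \<in> carrier GG" using s by (simp add: sv DD_def)
  then show ?thesis by (cases "n \<ge> 1") (simp_all add: sv Bf_def Bif_def G.cancel_l2)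
qed
lemma Bf_Bif: "s \<in> DD \<Longrightarrow> Bf (Bif s) = s"
proof -
  assume s: "s \<in> DD"
  obtain n h v where sv: "s = (n, h, v)" by (cases s) auto
  have "v \<in> carrier GG" using s by (simp add: sv DD_def)
  then show ?thesis by (cases "n + 1 \<ge> 1") (simp_all add: sv Bf_def Bif_def G.cancel_l1)
qed
lemma Cif_Cf: "s \<in> DD \<Longrightarrow> Cif (Cf s) = s"
proof -
  assume s: "s \<in> DD"
  obtain n h v where sv: "s = (n, h, v)" by (cases s) auto
  have "v \<in> carrier GG" "h \<in> carrier GG" using s by (simp_all add: sv DD_def)
  then show ?thesis by (cases "n = 0") (simp_all add: sv Cf_def Cif_def G.cancel_l2)
qed
lemma Cf_Cif: "s \<in> DD \<Longrightarrow> Cf (Cif s) = s"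
proof -
  assume s: "s \<in> DD"
  obtain n h v where sv: "s = (n, h, v)" by (cases s) auto
  have "v \<in> carrier GG" "h \<in> carrier GG" using s by (simp_all add: sv DD_def)
  then show ?thesis by (cases "n = 0") (simp_all add: sv Cf_def Cif_def G.cancel_l1)
qed
lemma Aif_Af: "Aif (Af s) = s"
  by (cases s) (simp add: Af_def Aif_def)
lemma Af_Aif: "Af (Aif s) = s"
  by (cases s) (simp add: Af_def Aif_def)

definition sig :: "int \<Rightarrow> st \<Rightarrow> st" where
  "sig k = (if k = -2 then Aif else if k = -1 then Af else if k = 0 then Bf
            else if k = 1 then Cf else id)"
definition sigi :: "int \<Rightarrow> st \<Rightarrow> st" where
  "sigi k = (if k = -2 then Af else if k = -1 then Aif else if k = 0 then Bif
            else if k = 1 then Cif else id)"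

lemma sig_DD: "s \<in> DD \<Longrightarrow> sig k s \<in> DD"
  by (auto simp: sig_def Af_DD Aif_DD Bf_DD Cf_DD)
lemma sigi_DD: "s \<in> DD \<Longrightarrow> sigi k s \<in> DD"
  by (auto simp: sigi_def Af_DD Aif_DD Bif_DD Cif_DD)
lemma sigi_sig: "s \<in> DD \<Longrightarrow> sigi k (sig k s) = s"
  by (auto simp: sig_def sigi_def Aif_Af Af_Aif Bif_Bf Cif_Cf)
lemma sig_sigi: "s \<in> DD \<Longrightarrow> sig k (sigi k s) = s"
  by (auto simp: sig_def sigi_def Aif_Af Af_Aif Bf_Bif Cf_Cif)

lemma pow_DD:
  assumes "\<And>s. s \<in> DD \<Longrightarrow> f s \<in> DD" shows "s \<in> DD \<Longrightarrow> (f ^^ i) s \<in> DD"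
  by (induction i) (auto intro: assms)

lemma pow_inv:
  assumes "\<And>s. s \<in> DD \<Longrightarrow> f s \<in> DD" "\<And>s. s \<in> DD \<Longrightarrow> g (f s) = s"
  shows "s \<in> DD \<Longrightarrow> (g ^^ i) ((f ^^ i) s) = s"
proof (induction i)
  case 0 then show ?case by simp
next
  case (Suc i)
  have e1: "(f ^^ Suc i) s = f ((f ^^ i) s)" by simp
  have e2: "\<And>x. (g ^^ Suc i) x = (g ^^ i) (g x)"
    by (simp add: funpow_Suc_right del: funpow.simps)
  have "(g ^^ Suc i) ((f ^^ Suc i) s) = (g ^^ i) (g (f ((f ^^ i) s)))"
    by (simp only: e1 e2)
  also have "\<dots> = (g ^^ i) ((f ^^ i) s)"
    using assms pow_DD[OF assms(1)] Suc by simp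
  finally show ?case using Suc by simp
qed

lemma Bf_pow:
  assumes "v \<in> carrier GG"
  shows "(Bf ^^ i) (int (j + i), h, v) = (int j, h, gmul (gmul (ginv (gx j)) (gx (j + i))) v)"
  using assms
proof (induction i arbitrary: v)
  case 0
  then show ?case by (simp add: G.m_assoc[symmetric])
next
  case (Suc i)
  have "(Bf ^^ Suc i) (int (j + Suc i), h, v) = (Bf ^^ i) (Bf (int (j + Suc i), h, v))"
    by (simp add: funpow_Suc_right del: funpow.simps)
  also have "Bf (int (j + Suc i), h, v) = (int (j + i), h, gmul (cc (j + Suc i)) v)"
  proof -
    have "\<And>m. m \<ge> 1 \<Longrightarrow> Bf (int m, h, v) = (int m - 1, h, gmul (cc m) v)"
      by (simp add: Bf_def)
    from this[of "j + Suc i"] show ?thesis by simp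
  qed
  also have "(Bf ^^ i) \<dots> = (int j, h, gmul (gmul (ginv (gx j)) (gx (j + i))) (gmul (cc (j + Suc i)) v))"
    using Suc by simp
  also have "gmul (gmul (ginv (gx j)) (gx (j + i))) (gmul (cc (j + Suc i)) v)
     = gmul (gmul (ginv (gx j)) (gx (j + Suc i))) v"
    using Suc.prems by (simp add: cc_def G.m_assoc G.cancel_l1)
  finally show ?case .
qed

lemma Bf_pow0:
  assumes "v \<in> carrier GG"
  shows "(Bf ^^ i) (int i, h, v) = (0, h, gmul (gx i) v)"
proof -
  have g0: "gx 0 = \<one>\<^bsub>GG\<^esub>" by (simp add: gx_def)
  show ?thesis using Bf_pow[OF assms, of i 0 h] assms by (simp add: g0)
qed

lemma Bf_fst: "fst (Bf s) = fst s - 1"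
  by (auto simp: Bf_def split: prod.splits)

lemma Bf_pow_fst: "fst ((Bf ^^ i) s) = fst s - int i"
  by (induction i) (auto simp: Bf_fst)

lemma Cf_fix: "fst s \<noteq> 0 \<Longrightarrow> Cf s = s"
  by (auto simp: Cf_def split: prod.splits)
lemma Cif_fix: "fst s \<noteq> 0 \<Longrightarrow> Cif s = s"
  by (auto simp: Cif_def split: prod.splits)

definition Phi0 :: "nat word set \<Rightarrow> st \<Rightarrow> st" where
  "Phi0 c = (\<lambda>(n, h, v). if n = 0 then (n, gmul c h, v) else (n, h, v))"

lemma main_level:
  assumes s: "s \<in> DD"
  shows "(sigi (k - 1) ^^ i) ((sigi k ^^ i) (sig (k + 1) ((sig k ^^ i) ((sig (k - 1) ^^ i)
           (sigi (k + 1) s))))) = (if k = 0 then Phi0 (gx i) s else s)"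
proof -
  have inv1: "\<And>k s. s \<in> DD \<Longrightarrow> (sigi k ^^ i) ((sig k ^^ i) s) = s"
    by (rule pow_inv) (auto intro: sig_DD sigi_sig)
  have D1: "\<And>k s. s \<in> DD \<Longrightarrow> (sig k ^^ i) s \<in> DD"
    by (rule pow_DD) (auto intro: sig_DD)
  consider "k \<ge> 1" | "k = 0" | "k = -1" | "k = -2" | "k = -3" | "k \<le> -4" by linarith
  then show ?thesis
  proof cases
    case 1
    then have "sig (k + 1) = id" "sigi (k + 1) = id" by (auto simp: sig_def sigi_def)
    then show ?thesis using 1 s inv1 D1 by simp
  next
    case 2
    obtain n h v where sv: "s = (n, h, v)" by (cases s) auto
    have hv: "h \<in> carrier GG" "v \<in> carrier GG" using s by (auto simp: sv DD_def)
    have e: "sig (-1) = Af" "sig 0 = Bf" "sig 1 = Cf" "sigi (-1) = Aif" "sigi 0 = Bif" "sigi 1 = Cif"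
      by (auto simp: sig_def sigi_def)
    have invB: "\<And>s. s \<in> DD \<Longrightarrow> (Bif ^^ i) ((Bf ^^ i) s) = s"
      by (rule pow_inv) (auto intro: Bf_DD Bif_Bf)
    show ?thesis
    proof (cases "n = 0")
      case True
      have "(Bf ^^ i) ((Af ^^ i) (Cif s)) = (0, gmul (ginv v) h, gmul (gx i) v)"
        using hv by (simp add: sv True Cif_def Bf_pow0)
      moreover have "Cf (0, gmul (ginv v) h, gmul (gx i) v) = (0, gmul (gx i) h, gmul (gx i) v)"
        using hv by (simp add: Cf_def G.m_assoc G.cancel_l1)
      moreover have "(Bif ^^ i) (0, gmul (gx i) h, gmul (gx i) v) = (int i, gmul (gx i) h, v)"
        using invB[of "(int i, gmul (gx i) h, v)"] Bf_pow0[of v i "gmul (gx i) h"] hv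
        by (simp add: DD_def)
      ultimately show ?thesis using 2 e hv by (simp add: sv True Phi0_def)
    next
      case False
      have "fst ((Bf ^^ i) ((Af ^^ i) s)) = n" by (simp add: Bf_pow_fst sv)
      then have "Cf ((Bf ^^ i) ((Af ^^ i) s)) = (Bf ^^ i) ((Af ^^ i) s)"
        using False by (simp add: Cf_fix)
      moreover have "Cif s = s" using False by (simp add: Cif_fix sv)
      moreover have "(Af ^^ i) s \<in> DD" using s by (simp add: sv DD_def)
      ultimately show ?thesis using 2 e invB False by (simp add: sv Phi0_def)
    qed
  next
    case 3
    obtain n h v where sv: "s = (n, h, v)" by (cases s) auto
    have e: "sig (-2) = Aif" "sig (-1) = Af" "sig 0 = Bf" "sigi (-2) = Af" "sigi (-1) = Aif" "sigi 0 = Bif"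
      by (auto simp: sig_def sigi_def)
    have aa: "\<And>t. (Af ^^ i) ((Aif ^^ i) t) = t" by (case_tac t) auto
    have "Bf (Bif s) = s" using s by (rule Bf_Bif)
    then show ?thesis using 3 e by (simp add: aa)
  next
    case 4
    obtain n h v where sv: "s = (n, h, v)" by (cases s) auto
    have e: "sig (-3) = id" "sig (-2) = Aif" "sig (-1) = Af" "sigi (-3) = id" "sigi (-2) = Af" "sigi (-1) = Aif"
      by (auto simp: sig_def sigi_def)
    have f: "\<And>n h v. Af (n, h, v) = (n + 1, h, v)" "\<And>n h v. Aif (n, h, v) = (n - 1, h, v)"
      by (auto simp: Af_def Aif_def)
    show ?thesis using 4 e by (simp add: sv f)
  next
    case 5
    have e: "sig (-4) = id" "sig (-3) = id" "sig (-2) = Aif" "sigi (-4) = id" "sigi (-3) = id" "sigi (-2) = Af"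
      by (auto simp: sig_def sigi_def)
    show ?thesis using 5 e by (simp add: Aif_Af)
  next
    case 6
    then have "sig (k + 1) = id" "sigi (k + 1) = id" "sig k = id" "sigi k = id"
      "sig (k - 1) = id" "sigi (k - 1) = id" by (auto simp: sig_def sigi_def)
    then show ?thesis using 6 by simp
  qed
qed


type_synonym om = "int \<times> st"

definition Xf :: "om \<Rightarrow> om" where "Xf = (\<lambda>(k, s). (k + 1, s))"
definition Xif :: "om \<Rightarrow> om" where "Xif = (\<lambda>(k, s). (k - 1, s))"
definition Yf :: "om \<Rightarrow> om" where "Yf = (\<lambda>(k, s). (k, sig k s))"
definition Yif :: "om \<Rightarrow> om" where "Yif = (\<lambda>(k, s). (k, sigi k s))"

definition el :: "xy \<times> bool \<Rightarrow> om \<Rightarrow> om" where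
  "el l = (case l of (X, b) \<Rightarrow> if b then Xf else Xif | (Y, b) \<Rightarrow> if b then Yf else Yif)"

primrec EE :: "xy word \<Rightarrow> om \<Rightarrow> om" where
  "EE [] = id"
| "EE (l # w) = el l \<circ> EE w"

definition OD :: "om set" where "OD = UNIV \<times> DD"

lemma el_OD: "w \<in> OD \<Longrightarrow> el l w \<in> OD"
  by (auto simp: OD_def el_def Xf_def Xif_def Yf_def Yif_def sig_DD sigi_DD
      split: xy.splits prod.splits)

lemma el_inv:
  assumes "w \<in> OD" shows "el (a, \<not> b) (el (a, b) w) = w"
proof -
  obtain k s where w: "w = (k, s)" by (cases w) auto
  have "s \<in> DD" using assms by (simp add: w OD_def)
  then show ?thesis
    by (cases a; cases b) (simp_all add: w el_def Xf_def Xif_def Yf_def Yif_def sig_sigi sigi_sig)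
qed

lemma EE_append[simp]: "EE (u @ v) = EE u \<circ> EE v"
  by (induction u) auto

lemma EE_OD: "w \<in> OD \<Longrightarrow> EE u w \<in> OD"
  by (induction u) (auto intro: el_OD)

lemma EE_inv: "w \<in> OD \<Longrightarrow> EE (inv_word u) (EE u w) = w"
proof (induction u)
  case Nil then show ?case by simp
next
  case (Cons l u)
  obtain a b where l: "l = (a, b)" by force
  have "EE (inv_word (l # u)) (EE (l # u) w) = EE (inv_word u) (el (a, \<not> b) (el (a, b) (EE u w)))"
    by (simp add: l inv_word_Cons)
  also have "\<dots> = EE (inv_word u) (EE u w)" using el_inv EE_OD Cons.prems by simp
  finally show ?case using Cons by simp
qed

lemma EE_ypow: "EE (concat (replicate i yw)) (k, s) = (k, (sig k ^^ i) s)"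
  by (induction i) (auto simp: yw_def el_def Yf_def)

lemma EE_yipow: "EE (concat (replicate i yinv)) (k, s) = (k, (sigi k ^^ i) s)"
  by (induction i) (auto simp: yinv_def el_def Yif_def)

lemma inv_word_ypow: "inv_word (concat (replicate i yw)) = concat (replicate i yinv)"
proof (induction i)
  case 0 then show ?case by simp
next
  case (Suc i)
  have "inv_word (concat (replicate (Suc i) yw)) = concat (replicate i yinv) @ yinv"
    using Suc by (simp add: yw_def yinv_def inv_word_def)
  also have "\<dots> = concat (replicate i yinv @ [yinv])" by simp
  also have "\<dots> = concat (replicate (Suc i) yinv)" by (simp only: replicate_append_same replicate_Suc)
  finally show ?case .
qed

definition Phi :: "nat word set \<Rightarrow> om \<Rightarrow> om" where
  "Phi c = (\<lambda>(k, s). if k = 0 then (k, Phi0 c s) else (k, s))"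

lemma EE_basic[simp]: "EE xw = Xf" "EE xinv = Xif" "EE yw = Yf" "EE yinv = Yif"
  "inv_word xw = xinv" "inv_word xinv = xw" "inv_word yw = yinv" "inv_word yinv = yw"
  by (auto simp: xw_def xinv_def yw_def yinv_def el_def inv_word_def)

lemma EE_a: "s \<in> DD \<Longrightarrow> EE (a_word i) (k, s) = Phi (gx i) (k, s)"
proof -
  assume s: "s \<in> DD"
  have "EE (a_word i) (k, s) = (k, (sigi (k - 1) ^^ i) ((sigi k ^^ i) (sig (k + 1) ((sig k ^^ i) ((sig (k - 1) ^^ i)
           (sigi (k + 1) s))))))"
    by (simp add: a_word_def Let_def conj_word_def inv_word_ypow EE_ypow EE_yipow
        Xf_def Xif_def Yf_def Yif_def algebra_simps)
  also have "\<dots> = Phi (gx i) (k, s)"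
    using main_level[OF s, where k=k and i=i] by (simp add: Phi_def)
  finally show ?thesis .
qed

end


lemma subst_a_simps[simp]:
  "subst_a [] = []"
  "subst_a ((i, b) # w) = (if b then a_word i else inv_word (a_word i)) @ subst_a w"
  "subst_a (u @ v) = subst_a u @ subst_a v"
  by (auto simp: subst_a_def)

lemma inv_word_inv[simp]: "inv_word (inv_word w) = w"
  by (simp add: inv_word_def rev_map comp_def case_prod_beta)

lemma inv_word_cancel2: "pres_eq R (u @ inv_word u) []"
  using inv_word_cancel[of R "inv_word u"] by simp

lemma pres_eq_cancel_gen:
  assumes "pres_eq R m []" shows "pres_eq R (p @ m @ q) (p @ q)"
  using pres_eq_cong[OF assms, of p q] by simp

lemma subst_wd: "pres_eq R u v \<Longrightarrow> pres_eq (subst_a ` R) (subst_a u) (subst_a v)"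
proof (induction rule: pres_eq.induct)
  case (refl w) then show ?case by (rule pres_eq.refl)
next
  case (sym u v) then show ?case using pres_eq.sym by blast
next
  case (trans u v w) then show ?case by (metis pres_eq.trans)
next
  case (cancel u a b v)
  have "pres_eq (subst_a ` R) (subst_a [(a, b), (a, \<not> b)]) []"
    by (cases b) (simp_all add: inv_word_cancel inv_word_cancel2)
  from pres_eq_cancel_gen[OF this, of "subst_a u" "subst_a v"] show ?case by simp
next
  case (relator r u v)
  have "pres_eq (subst_a ` R) (subst_a u @ subst_a r @ subst_a v) (subst_a u @ subst_a v)"
    by (rule pres_eq.relator) (use relator in auto)
  then show ?case by simp
qed

context PR
begin

lemma Phi_OD: "c \<in> carrier GG \<Longrightarrow> w \<in> OD \<Longrightarrow> Phi c w \<in> OD"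
  by (cases w) (simp add: Phi_def Phi0_def OD_def DD_def split: prod.splits)

lemma Phi_mult: "a \<in> carrier GG \<Longrightarrow> b \<in> carrier GG \<Longrightarrow> w \<in> OD \<Longrightarrow>
   Phi (gmul a b) w = Phi a (Phi b w)"
  by (cases w) (simp add: Phi_def Phi0_def OD_def DD_def G.m_assoc split: prod.splits)

lemma Phi_one: "w \<in> OD \<Longrightarrow> Phi \<one>\<^bsub>GG\<^esub> w = w"
  by (cases w) (simp add: Phi_def Phi0_def OD_def DD_def split: prod.splits)

lemma class_carrier: "set w \<subseteq> {1..} \<times> UNIV \<Longrightarrow> pres_class R w \<in> carrier GG"
  unfolding GG_def carrier_pres by blast

lemma class_Cons: "pres_class R (l # w) = gmul (pres_class R [l]) (pres_class R w)"
  unfolding GG_def mult_class by simp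

lemma class_T: "i \<ge> 1 \<Longrightarrow> pres_class R [(i, True)] = gx i"
  by (simp add: gx_def)

lemma class_F: assumes "i \<ge> 1" shows "pres_class R [(i, False)] = ginv (gx i)"
proof -
  have "gmul (pres_class R [(i, False)]) (gx i) = \<one>\<^bsub>GG\<^esub>"
  proof -
    have "pres_eq R ([] @ [(i, False), (i, \<not> False)] @ []) ([] @ [])" by (rule pres_eq.cancel)
    then show ?thesis using assms
      unfolding GG_def by (simp add: gx_def mult_class one_pres class_eq_iff)
  qed
  moreover have "pres_class R [(i, False)] \<in> carrier GG"
    using assms by (intro class_carrier) auto
  ultimately show ?thesis by (metis G.inv_equality gx_carrier)
qed

lemma EE_a': "w \<in> OD \<Longrightarrow> EE (a_word i) w = Phi (gx i) w"
  by (cases w) (auto simp: OD_def EE_a)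

lemma EE_inv_a: assumes w: "w \<in> OD" shows "EE (inv_word (a_word i)) w = Phi (ginv (gx i)) w"
proof -
  let ?w = "Phi (ginv (gx i)) w"
  have w': "?w \<in> OD" using w by (simp add: Phi_OD)
  have "EE (a_word i) ?w = Phi (gx i) ?w" by (rule EE_a'[OF w'])
  also have "\<dots> = Phi (gmul (gx i) (ginv (gx i))) w"
    by (rule Phi_mult[symmetric]) (auto simp: w)
  also have "\<dots> = w" using w by (simp add: Phi_one)
  finally have "EE (inv_word (a_word i)) w = EE (inv_word (a_word i)) (EE (a_word i) ?w)" by simp
  also have "\<dots> = ?w" using w' by (rule EE_inv)
  finally show ?thesis .
qed

lemma EE_subst: "set u \<subseteq> {1..} \<times> UNIV \<Longrightarrow> w \<in> OD \<Longrightarrow> EE (subst_a u) w = Phi (pres_class R u) w"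
proof (induction u arbitrary: w)
  case Nil
  have "pres_class R [] = \<one>\<^bsub>GG\<^esub>" by (simp add: GG_def one_pres)
  then show ?case using Nil by (simp add: Phi_one)
next
  case (Cons l u)
  obtain i b where l: "l = (i, b)" by force
  have i: "i \<ge> 1" using Cons.prems by (auto simp: l)
  have u: "set u \<subseteq> {1..} \<times> UNIV" using Cons.prems by auto
  have cu: "pres_class R u \<in> carrier GG" using u by (rule class_carrier)
  have IH: "EE (subst_a u) w = Phi (pres_class R u) w" using Cons u by blast
  have o: "Phi (pres_class R u) w \<in> OD" using cu Cons.prems by (simp add: Phi_OD)
  show ?case
  proof (cases b)
    case True
    have cl: "pres_class R ((i, True) # u) = gmul (gx i) (pres_class R u)"
      using class_Cons[of "(i, True)" u] class_T[OF i] by simp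
    show ?thesis using IH o cu Cons.prems i
      by (simp add: l True EE_a' cl Phi_mult)
  next
    case False
    have cl: "pres_class R ((i, False) # u) = gmul (ginv (gx i)) (pres_class R u)"
      using class_Cons[of "(i, False)" u] class_F[OF i] by simp
    show ?thesis using IH o cu Cons.prems i
      by (simp add: l False EE_inv_a cl Phi_mult)
  qed
qed

lemma EE_rel:
  assumes R: "\<forall>r\<in>R. \<forall>(i, b)\<in>set r. i \<ge> 1"
  shows "pres_eq (subst_a ` R) W1 W2 \<Longrightarrow> \<forall>w\<in>OD. EE W1 w = EE W2 w"
proof (induction rule: pres_eq.induct)
  case (refl w) then show ?case by simp
next
  case (sym u v) then show ?case by simp
next
  case (trans u v w) then show ?case by simp
next
  case (cancel u a b v)
  show ?case
  proof
    fix w assume "w \<in> OD"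
    then have "EE v w \<in> OD" by (rule EE_OD)
    then show "EE (u @ [(a, b), (a, \<not> b)] @ v) w = EE (u @ v) w"
      using el_inv[of "EE v w" a "\<not> b"] by simp
  qed
next
  case (relator r u v)
  then obtain r0 where r0: "r0 \<in> R" "r = subst_a r0" by auto
  have set0: "set r0 \<subseteq> {1..} \<times> UNIV" using R r0 by fastforce
  have c: "pres_class R r0 = \<one>\<^bsub>GG\<^esub>"
  proof -
    have "pres_eq R ([] @ r0 @ []) ([] @ [])" by (rule pres_eq.relator) (rule r0)
    then show ?thesis unfolding GG_def by (simp add: one_pres class_eq_iff)
  qed
  show ?case
  proof
    fix w assume "w \<in> OD"
    then have o: "EE v w \<in> OD" by (rule EE_OD)
    have "EE r (EE v w) = EE v w" using EE_subst[OF set0 o] r0 c o by (simp add: Phi_one)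
    then show "EE (u @ r @ v) w = EE (u @ v) w" by simp
  qed
qed

end

theorem theorem1p1:
  fixes R :: "nat word set"
  assumes "\<forall>r\<in>R. \<forall>(i, b)\<in>set r. i \<ge> 1"
  shows "\<exists>h. h \<in> hom (presentation {1..} R) (presentation UNIV (subst_a ` R))
           \<and> inj_on h (carrier (presentation {1..} R))
           \<and> (\<forall>i\<ge>1. h (pres_class R [(i, True)]) = pres_class (subst_a ` R) (a_word i))"
proof -
  interpret PR R .
  let ?R' = "subst_a ` R"
  define h where "h = (\<lambda>A. {W. \<exists>u\<in>A. pres_eq ?R' W (subst_a u)})"
  have hc: "h (pres_class R u) = pres_class ?R' (subst_a u)" for u
    unfolding h_def pres_class_def
    by (auto intro: pres_eq.trans pres_eq.sym subst_wd pres_eq.refl)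
  have carrG: "carrier (presentation {1..} R) = {pres_class R w | w. set w \<subseteq> {1..} \<times> UNIV}"
    by (rule carrier_pres)
  have hom: "h \<in> hom (presentation {1..} R) (presentation UNIV ?R')"
  proof (rule homI)
    fix x assume "x \<in> carrier (presentation {1..} R)"
    then obtain u where "x = pres_class R u" unfolding carrG by blast
    then show "h x \<in> carrier (presentation UNIV ?R')"
      by (auto simp: hc carrier_pres)
  next
    fix x y assume "x \<in> carrier (presentation {1..} R)" "y \<in> carrier (presentation {1..} R)"
    then obtain u v where "x = pres_class R u" "y = pres_class R v" unfolding carrG by blast
    then show "h (x \<otimes>\<^bsub>presentation {1..} R\<^esub> y) = h x \<otimes>\<^bsub>presentation UNIV ?R'\<^esub> h y"
      by (simp add: mult_class hc)
  qed
  have inj: "inj_on h (carrier (presentation {1..} R))"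
  proof (rule inj_onI)
    fix x y assume x: "x \<in> carrier (presentation {1..} R)" and y: "y \<in> carrier (presentation {1..} R)"
      and e: "h x = h y"
    from x obtain u where u: "x = pres_class R u" "set u \<subseteq> {1..} \<times> UNIV" unfolding carrG by blast
    from y obtain v where v: "y = pres_class R v" "set v \<subseteq> {1..} \<times> UNIV" unfolding carrG by blast
    have "pres_eq ?R' (subst_a u) (subst_a v)"
      using e by (simp add: u v hc class_eq_iff)
    then have EEq: "\<forall>w\<in>OD. EE (subst_a u) w = EE (subst_a v) w"
      by (rule EE_rel[OF assms])
    define w0 :: om where "w0 = (0, 0, \<one>\<^bsub>GG\<^esub>, \<one>\<^bsub>GG\<^esub>)"
    have w0: "w0 \<in> OD" by (simp add: w0_def OD_def DD_def)
    have cu: "pres_class R u \<in> carrier GG" using u(2) by (rule class_carrier)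
    have cv: "pres_class R v \<in> carrier GG" using v(2) by (rule class_carrier)
    have "Phi (pres_class R u) w0 = Phi (pres_class R v) w0"
      using EEq w0 EE_subst[OF u(2) w0] EE_subst[OF v(2) w0] by simp
    then have "pres_class R u = pres_class R v"
      using cu cv by (simp add: Phi_def Phi0_def w0_def)
    then show "x = y" by (simp add: u v)
  qed
  have gen: "\<forall>i\<ge>1. h (pres_class R [(i, True)]) = pres_class ?R' (a_word i)"
    by (simp add: hc)
  show ?thesis using hom inj gen by blast
qed

end
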